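(* Let $X$ be an infinite compact metrizable space, $h\colon X\to X$ a minimal homeomorphism, and suppose $(X,h)$ has the topological small boundary property. Let $\varepsilon>0$. (1) For any open $U\subset X$ with $\partial U$ universally null, there is an open $V\subset X$ with $\overline{V}\subset U$, $\partial V$ topologically $h$-small, and $\mu(U\setminus\overline{V})<\varepsilon$ for all $\mu\in M_h(X)$. (2) For any open $U\subset X$ and any closed $F\subset U$ with $\partial F$ universally null, there is an open $V\subset X$ with $F\subset V\subset\overline{V}\subset U$, $\partial V$ topologically $h$-small, and $\mu(V\setminus F)<\varepsilon$ for all $\mu\in M_h(X)$. (3) For any closed $F\subset X$ with $\partial F$ universally null, there is an open $V\subset X$ with $F\subset V$, $\partial V$ topologically $h$-small, and $\mu(V\setminus F)<\varepsilon$ for all $\mu\in M_h(X)$.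
   Context: $M_h(X)$ denotes the set of $h$-invariant Borel probability measures on $X$; a Borel set is universally null if it has measure $0$ for all $\mu\in M_h(X)$; $\partial A$ is the boundary of $A$. A closed set $F\subset X$ is topologically $h$-small if there is $m\in\mathbb{Z}_{+}$ such that whenever $d(0),\dots,d(m)$ are $m+1$ distinct integers, $h^{d(0)}(F)\cap\cdots\cap h^{d(m)}(F)=\varnothing$. $(X,h)$ has the topological small boundary property if whenever $F,K\subset X$ are disjoint compact sets, there exist open sets $U,V\subset X$ with $F\subset U$, $K\subset V$, $\overline{U}\cap\overline{V}=\varnothing$ and $\partial U$ topologically $h$-small. *)

theory Defs
  imports "HOL-Analysis.Analysis" "HOL-Probability.Probability"
begin

definition hpow :: "('a \<Rightarrow> 'a) \<Rightarrow> int \<Rightarrow> 'a \<Rightarrow> 'a" where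
  "hpow h k = (if k \<ge> 0 then h ^^ nat k else (inv h) ^^ nat (- k))"

definition homeo :: "('a::topological_space \<Rightarrow> 'a) \<Rightarrow> bool" where
  "homeo h \<longleftrightarrow> (\<exists>g. homeomorphism UNIV UNIV h g)"

definition minimal_map :: "('a::topological_space \<Rightarrow> 'a) \<Rightarrow> bool" where
  "minimal_map h \<longleftrightarrow> (\<forall>F. closed F \<and> h ` F = F \<longrightarrow> F = {} \<or> F = UNIV)"

definition inv_measures :: "('a::topological_space \<Rightarrow> 'a) \<Rightarrow> 'a measure set" where
  "inv_measures h = {M. sets M = sets borel \<and> prob_space M \<and>
      (\<forall>A \<in> sets borel. measure M (h -` A) = measure M A)}"

definition universally_null :: "('a::topological_space \<Rightarrow> 'a) \<Rightarrow> 'a set \<Rightarrow> bool" where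
  "universally_null h B \<longleftrightarrow> B \<in> sets borel \<and> (\<forall>M \<in> inv_measures h. measure M B = 0)"

definition top_small :: "('a::topological_space \<Rightarrow> 'a) \<Rightarrow> 'a set \<Rightarrow> bool" where
  "top_small h F \<longleftrightarrow> closed F \<and>
     (\<exists>m::nat. \<forall>d::nat \<Rightarrow> int. inj_on d {0..m} \<longrightarrow>
        (\<Inter>i\<in>{0..m}. hpow h (d i) ` F) = {})"

definition top_small_boundary_property :: "('a::topological_space \<Rightarrow> 'a) \<Rightarrow> bool" where
  "top_small_boundary_property h \<longleftrightarrow>
     (\<forall>F K. compact F \<and> compact K \<and> F \<inter> K = {} \<longrightarrow>
        (\<exists>U V. open U \<and> open V \<and> F \<subseteq> U \<and> K \<subseteq> V \<and>
               closure U \<inter> closure V = {} \<and> top_small h (frontier U)))"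

end

theory Submission
  imports Defs
begin

definition rw :: "(nat \<Rightarrow> nat) \<Rightarrow> nat \<Rightarrow> real" where
  "rw N k = (\<Prod>j\<le>k. 1 / (4 * real (N j)))"

definition enc :: "(nat \<Rightarrow> nat) \<Rightarrow> (nat \<Rightarrow> nat) \<Rightarrow> real" where
  "enc N s = (\<Sum>i. real (s i) * rw N i)"

locale cw =
  fixes N :: "nat \<Rightarrow> nat"
  assumes Npos: "N k > 0"
begin

lemma rw_pos: "rw N k > 0"
  unfolding rw_def using Npos by (intro prod_pos) auto

lemma rw_0: "rw N 0 = 1 / (4 * real (N 0))"
  unfolding rw_def by simp

lemma rw_Suc: "rw N (Suc k) = rw N k / (4 * real (N (Suc k)))"
  unfolding rw_def by (simp add: prod.atMost_Suc)

lemma Nrw_Suc: "real (N (Suc k)) * rw N (Suc k) = rw N k / 4"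
  unfolding rw_Suc using Npos[of "Suc k"] by (simp add: field_simps)

lemma Nrw_0: "real (N 0) * rw N 0 = 1 / 4"
  unfolding rw_0 using Npos[of 0] by (simp add: field_simps)

lemma rw_Suc_le: "rw N (Suc k) \<le> rw N k / 4"
proof -
  have "rw N (Suc k) = rw N k / (4 * real (N (Suc k)))" by (rule rw_Suc)
  also have "\<dots> \<le> rw N k / 4"
    using rw_pos[of k] Npos[of "Suc k"]
    by (intro divide_left_mono) auto
  finally show ?thesis .
qed

lemma rw_le: "rw N k \<le> (1/4) ^ Suc k"
proof (induction k)
  case 0 then show ?case using Npos[of 0] by (simp add: rw_0 field_simps)
next
  case (Suc k)
  have "rw N (Suc k) \<le> rw N k / 4" by (rule rw_Suc_le)
  also have "\<dots> \<le> (1/4)^Suc k / 4" using Suc by simp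
  finally show ?case by simp
qed

lemma rw_geom: "rw N (j + i) \<le> rw N j * (1/4) ^ i"
proof (induction i)
  case 0 then show ?case by simp
next
  case (Suc i)
  have "rw N (j + Suc i) \<le> rw N (j + i) / 4" using rw_Suc_le[of "j + i"] by simp
  also have "\<dots> \<le> rw N j * (1/4) ^ i / 4" using Suc by simp
  finally show ?case by simp
qed

lemma rw_mono: assumes "j \<le> k" shows "rw N k \<le> rw N j"
proof -
  obtain i where "k = j + i" using assms le_Suc_ex by blast
  then have "rw N k \<le> rw N j * (1/4) ^ i" using rw_geom by simp
  also have "\<dots> \<le> rw N j" using rw_pos[of j]
    by (intro mult_left_le) (auto simp: power_le_one)
  finally show ?thesis .
qed

lemma Nrw_le: "real (N i) * rw N i \<le> (1/4) ^ Suc i"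
proof (cases i)
  case 0 then show ?thesis using Nrw_0 by simp
next
  case (Suc k)
  then have "real (N i) * rw N i = rw N k / 4" using Nrw_Suc[of k] by simp
  also have "\<dots> \<le> (1/4)^Suc k / 4" using rw_le[of k] by simp
  finally show ?thesis using Suc by simp
qed

lemma summable_drw:
  assumes "\<And>i. \<bar>d i\<bar> \<le> real (N i)"
  shows "summable (\<lambda>i. d i * rw N i)"
proof (rule summable_comparison_test[where g = "\<lambda>i. (1/4) ^ Suc i"])
  show "\<exists>M. \<forall>n\<ge>M. norm (d n * rw N n) \<le> (1/4) ^ Suc n"
  proof (intro exI allI impI)
    fix n
    have "norm (d n * rw N n) = \<bar>d n\<bar> * rw N n" using rw_pos[of n] by (simp add: abs_mult)
    also have "\<dots> \<le> real (N n) * rw N n" using rw_pos[of n] assms[of n]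
      by (intro mult_right_mono) auto
    also have "\<dots> \<le> (1/4) ^ Suc n" by (rule Nrw_le)
    finally show "norm (d n * rw N n) \<le> (1/4) ^ Suc n" .
  qed
  show "summable (\<lambda>i. (1/4::real) ^ Suc i)"
    by (subst power_Suc) (intro summable_mult summable_geometric, simp)
qed

lemma tail_bound:
  assumes "\<And>i. \<bar>d i\<bar> \<le> real (N i)"
  shows "\<bar>\<Sum>i. d (i + Suc j) * rw N (i + Suc j)\<bar> \<le> rw N j / 3"
proof -
  have b: "\<bar>d (i + Suc j) * rw N (i + Suc j)\<bar> \<le> rw N j / 4 * (1/4)^i" for i
  proof -
    have "\<bar>d (i + Suc j) * rw N (i + Suc j)\<bar> = \<bar>d (i + Suc j)\<bar> * rw N (i + Suc j)"
      using rw_pos[of "i + Suc j"] by (simp add: abs_mult)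
    also have "\<dots> \<le> real (N (i + Suc j)) * rw N (i + Suc j)"
      using rw_pos[of "i + Suc j"] assms[of "i + Suc j"]
      by (intro mult_right_mono) auto
    also have "\<dots> = rw N (j + i) / 4"
      using Nrw_Suc[of "j + i"] by (simp add: add.commute)
    also have "\<dots> \<le> rw N j * (1/4)^i / 4" using rw_geom[of j i] by simp
    finally show ?thesis by simp
  qed
  have sg: "summable (\<lambda>i. rw N j / 4 * (1/4::real)^i)"
    by (intro summable_mult summable_geometric) simp
  have s: "summable (\<lambda>i. \<bar>d (i + Suc j) * rw N (i + Suc j)\<bar>)"
    by (rule summable_comparison_test[OF _ sg]) (use b in auto)
  have "\<bar>\<Sum>i. d (i + Suc j) * rw N (i + Suc j)\<bar> \<le> (\<Sum>i. \<bar>d (i + Suc j) * rw N (i + Suc j)\<bar>)"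
    by (rule summable_rabs[OF s])
  also have "\<dots> \<le> (\<Sum>i. rw N j / 4 * (1/4::real)^i)"
    by (rule suminf_le[OF b s sg])
  also have "\<dots> = rw N j / 3"
    by (subst suminf_mult) (simp_all add: suminf_geometric)
  finally show ?thesis .
qed


definition digits :: "(nat \<Rightarrow> nat) \<Rightarrow> bool" where
  "digits s \<longleftrightarrow> (\<forall>i. s i < N i)"

lemma summable_enc: "digits s \<Longrightarrow> summable (\<lambda>i. real (s i) * rw N i)"
  by (rule summable_drw) (auto simp: digits_def less_imp_le)

lemma enc_diff:
  assumes "digits s" "digits t"
  shows "enc N s - enc N t = (\<Sum>i<Suc j. (real (s i) - real (t i)) * rw N i)
      + (\<Sum>i. (real (s (i + Suc j)) - real (t (i + Suc j))) * rw N (i + Suc j))"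
proof -
  let ?d = "\<lambda>i. real (s i) - real (t i)"
  have bd: "\<bar>?d i\<bar> \<le> real (N i)" for i using assms unfolding digits_def by (smt (verit) of_nat_0_le_iff of_nat_less_iff)
  have "enc N s - enc N t = (\<Sum>i. real (s i) * rw N i - real (t i) * rw N i)"
    unfolding enc_def using summable_enc[OF assms(1)] summable_enc[OF assms(2)] by (rule suminf_diff)
  also have "\<dots> = (\<Sum>i. ?d i * rw N i)" by (simp add: algebra_simps)
  also have "\<dots> = (\<Sum>i. ?d (i + Suc j) * rw N (i + Suc j)) + (\<Sum>i<Suc j. ?d i * rw N i)"
    by (rule suminf_split_initial_segment[OF summable_drw[OF bd]])
  finally show ?thesis by simp
qed

lemma digits_bd: "digits s \<Longrightarrow> digits t \<Longrightarrow> \<bar>real (s i) - real (t i)\<bar> \<le> real (N i)"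
  unfolding digits_def by (smt (verit) of_nat_0_le_iff of_nat_less_iff)

lemma enc_close:
  assumes "digits s" "digits t" "\<And>i. i \<le> j \<Longrightarrow> s i = t i"
  shows "\<bar>enc N s - enc N t\<bar> \<le> rw N j / 3"
proof -
  have "(\<Sum>i<Suc j. (real (s i) - real (t i)) * rw N i) = 0"
    using assms(3) by (intro sum.neutral) auto
  then show ?thesis using enc_diff[OF assms(1,2), of j]
      tail_bound[of "\<lambda>i. real (s i) - real (t i)" j] digits_bd[OF assms(1,2)] by simp
qed

lemma enc_sep:
  assumes "digits s" "digits t" "s j \<noteq> t j" "\<And>i. i < j \<Longrightarrow> s i = t i"
  shows "\<bar>enc N s - enc N t\<bar> \<ge> 2 * rw N j / 3"
proof -
  have "(\<Sum>i<Suc j. (real (s i) - real (t i)) * rw N i) = (real (s j) - real (t j)) * rw N j"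
    using assms(4) by (simp add: sum.neutral)
  moreover have "\<bar>(real (s j) - real (t j)) * rw N j\<bar> \<ge> rw N j"
  proof -
    have "\<bar>real (s j) - real (t j)\<bar> \<ge> 1" using assms(3) by linarith
    then show ?thesis using rw_pos[of j] by (simp add: abs_mult)
  qed
  moreover have "\<bar>\<Sum>i. (real (s (i + Suc j)) - real (t (i + Suc j))) * rw N (i + Suc j)\<bar> \<le> rw N j / 3"
    using tail_bound[of "\<lambda>i. real (s i) - real (t i)" j] digits_bd[OF assms(1,2)] by simp
  ultimately show ?thesis using enc_diff[OF assms(1,2), of j] by linarith
qed

lemma enc_agree:
  assumes "digits s" "digits t" "\<bar>enc N s - enc N t\<bar> < rw N k / 3" "i \<le> k"
  shows "s i = t i"
proof (rule ccontr)
  assume "s i \<noteq> t i"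
  define j where "j = (LEAST j. s j \<noteq> t j)"
  have j1: "s j \<noteq> t j" unfolding j_def by (rule LeastI[of _ i]) fact
  have j2: "j \<le> i" unfolding j_def by (rule Least_le) fact
  have j3: "\<And>l. l < j \<Longrightarrow> s l = t l" unfolding j_def using not_less_Least by blast
  have "2 * rw N j / 3 \<le> \<bar>enc N s - enc N t\<bar>" by (rule enc_sep[OF assms(1,2) j1 j3])
  moreover have "rw N k \<le> rw N j" using j2 assms(4) by (intro rw_mono) auto
  ultimately show False using assms(3) rw_pos[of j] by linarith
qed

lemma enc_inj:
  assumes "digits s" "digits t" "enc N s = enc N t" shows "s = t"
proof
  fix i show "s i = t i" using enc_agree[OF assms(1,2), of i i] assms(3) rw_pos[of i] by simp
qed

lemma enc_range: assumes "digits s" shows "0 \<le> enc N s" "enc N s \<le> 1/3"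
proof -
  show "0 \<le> enc N s" unfolding enc_def
    by (rule suminf_nonneg[OF summable_enc[OF assms]]) (simp add: rw_pos less_imp_le)
  have b: "real (s i) * rw N i \<le> (1/4)^Suc i" for i
  proof -
    have "real (s i) * rw N i \<le> real (N i) * rw N i" using assms rw_pos[of i]
      unfolding digits_def by (intro mult_right_mono) (auto simp: less_imp_le)
    then show ?thesis using Nrw_le[of i] by linarith
  qed
  have sg: "summable (\<lambda>i. (1/4::real) ^ Suc i)"
    by (subst power_Suc) (intro summable_mult summable_geometric, simp)
  have "enc N s \<le> (\<Sum>i. (1/4::real) ^ Suc i)" unfolding enc_def
    by (rule suminf_le[OF b summable_enc[OF assms] sg])
  also have "\<dots> = 1/3" by (subst power_Suc, subst suminf_mult) (simp_all add: suminf_geometric)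
  finally show "enc N s \<le> 1/3" .
qed

end

lemma exists_net:
  assumes "compact (UNIV :: 'a::metric_space set)" "e > 0"
  shows "\<exists>(n::nat) q. n > 0 \<and> (\<forall>x::'a. \<exists>i<n. dist x (q i) < e)"
proof -
  obtain F where F: "finite F" "(UNIV::'a set) \<subseteq> (\<Union>x\<in>F. ball x e)"
    using seq_compact_imp_totally_bounded[OF compact_imp_seq_compact[OF assms(1)]] assms(2) by blast
  have "F \<noteq> {}" using F(2) by auto
  then have cF: "card F > 0" using F(1) by (simp add: card_gt_0_iff)
  obtain g where g: "bij_betw g {0..<card F} F" using ex_bij_betw_nat_finite[OF F(1)] by blast
  have "\<forall>x::'a. \<exists>i<card F. dist x (g i) < e"
  proof
    fix x :: 'a
    have "x \<in> (\<Union>x\<in>F. ball x e)" using F(2) by blast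
    then obtain y where y: "y \<in> F" "dist y x < e" by auto
    then obtain i where "i < card F" "g i = y" using g unfolding bij_betw_def by (metis atLeastLessThan_iff imageE)
    then show "\<exists>i<card F. dist x (g i) < e" using y by (auto simp: dist_commute)
  qed
  then show ?thesis using cF by blast
qed

lemma half_pow_small: "(e::real) > 0 \<Longrightarrow> \<exists>k. (1/2::real)^k < e"
  by (rule real_arch_pow_inv) auto

lemma coding:
  assumes cpt: "compact (UNIV :: 'a::metric_space set)"
  shows "\<exists>K (P::real \<Rightarrow> 'a) \<iota>. closed K \<and> K \<subseteq> {-1<..1} \<and> continuous_on K P \<and>
            (\<forall>x. \<iota> x \<in> K \<and> P (\<iota> x) = x)"
proof -
  define \<delta> where "\<delta> k = (1/2::real)^k" for k
  have dpos: "\<delta> k > 0" for k by (simp add: \<delta>_def)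
  have dsmall: "\<exists>k. c * \<delta> k < e" if "e > 0" "c > 0" for c e
  proof -
    have "e / c > 0" using that by simp
    then obtain k where "(1/2::real)^k < e / c" using half_pow_small[of "e/c"] by blast
    then show ?thesis using that by (auto simp: \<delta>_def field_simps)
  qed
  have "\<forall>k. \<exists>(n::nat) q. n > 0 \<and> (\<forall>x::'a. \<exists>i<n. dist x (q i) < \<delta> k)"
    using exists_net[OF cpt] dpos by blast
  then have "\<forall>k. \<exists>nq. fst nq > (0::nat) \<and> (\<forall>x::'a. \<exists>i<fst nq. dist x (snd nq i) < \<delta> k)"
    by (metis fst_conv snd_conv)
  from choice[OF this] obtain f where f: "\<forall>k. fst (f k) > (0::nat) \<and> (\<forall>x::'a. \<exists>i<fst (f k). dist x (snd (f k) i) < \<delta> k)"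
    by blast
  define N where "N k = fst (f k)" for k
  define p where "p k = snd (f k)" for k
  have Np: "\<And>k. N k > 0" "\<And>k (x::'a). \<exists>i<N k. dist x (p k i) < \<delta> k"
    using f unfolding N_def p_def by auto
  interpret cw N by standard (rule Np(1))
  define S where "S = {s. digits s \<and> (\<forall>k. dist (p k (s k)) (p (Suc k) (s (Suc k))) \<le> 2 * \<delta> k)}"
  have cauchy_bd: "dist (p k (s k)) (p m (s m)) \<le> 4 * \<delta> k - 4 * \<delta> m" if "s \<in> S" "k \<le> m" for s k m
    using that(2)
  proof (induction m rule: dec_induct)
    case base then show ?case by simp
  next
    case (step m)
    have "dist (p k (s k)) (p (Suc m) (s (Suc m))) \<le> dist (p k (s k)) (p m (s m)) + dist (p m (s m)) (p (Suc m) (s (Suc m)))"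
      by (rule dist_triangle)
    also have "\<dots> \<le> 4 * \<delta> k - 4 * \<delta> m + 2 * \<delta> m" using step.IH that(1) unfolding S_def by (intro add_mono) auto
    also have "\<dots> = 4 * \<delta> k - 4 * \<delta> (Suc m)" by (simp add: \<delta>_def)
    finally show ?case .
  qed
  have cauchy_bd': "dist (p k (s k)) (p m (s m)) \<le> 4 * \<delta> k" if "s \<in> S" "k \<le> m" for s k m
    using cauchy_bd[OF that] dpos[of m] by linarith
  have cpl: "uniform_space_class.complete (UNIV::'a set)" by (rule compact_imp_complete[OF cpt])
  define \<pi> where "\<pi> s = lim (\<lambda>k. p k (s k))" for s
  have conv: "(\<lambda>k. p k (s k)) \<longlonglongrightarrow> \<pi> s" if "s \<in> S" for s
  proof -
    have "Cauchy (\<lambda>k. p k (s k))"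
    proof (rule metric_CauchyI)
      fix e :: real assume "e > 0"
      then obtain M where M: "8 * \<delta> M < e" using dsmall[of e 8] by auto
      show "\<exists>M. \<forall>m\<ge>M. \<forall>n\<ge>M. dist (p m (s m)) (p n (s n)) < e"
      proof (intro exI allI impI)
        fix m n assume "M \<le> m" "M \<le> n"
        have "dist (p m (s m)) (p n (s n)) \<le> dist (p M (s M)) (p m (s m)) + dist (p M (s M)) (p n (s n))"
          by (rule dist_triangle3)
        also have "\<dots> \<le> 4 * \<delta> M + 4 * \<delta> M" using cauchy_bd'[OF that] \<open>M \<le> m\<close> \<open>M \<le> n\<close>
          by (intro add_mono) auto
        finally show "dist (p m (s m)) (p n (s n)) < e" using M by linarith
      qed
    qed
    then obtain l where "(\<lambda>k. p k (s k)) \<longlonglongrightarrow> l" using cpl unfolding complete_def by blast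
    then show ?thesis unfolding \<pi>_def by (simp add: limI)
  qed
  have dlim: "dist (p k (s k)) (\<pi> s) \<le> 4 * \<delta> k" if "s \<in> S" for s k
  proof (rule LIMSEQ_le_const2)
    show "(\<lambda>m. dist (p k (s k)) (p m (s m))) \<longlonglongrightarrow> dist (p k (s k)) (\<pi> s)"
      by (intro tendsto_intros conv that)
    show "\<exists>N. \<forall>n\<ge>N. dist (p k (s k)) (p n (s n)) \<le> 4 * \<delta> k"
      using cauchy_bd'[OF that] by blast
  qed
  have injS: "inj_on (enc N) S" by (rule inj_onI) (auto simp: S_def intro: enc_inj)
  define K where "K = enc N ` S"
  define P where "P y = \<pi> (inv_into S (enc N) y)" for y
  have P_enc: "P (enc N s) = \<pi> s" if "s \<in> S" for s
    unfolding P_def using inv_into_f_f[OF injS that] by simp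
  have contP: "continuous_on K P"
    unfolding continuous_on_iff
  proof (intro ballI allI impI)
    fix y e assume "y \<in> K" "(e::real) > 0"
    then obtain s where s: "s \<in> S" "y = enc N s" unfolding K_def by auto
    obtain k where k: "8 * \<delta> k < e" using dsmall[of e 8] \<open>e > 0\<close> by auto
    show "\<exists>d>0. \<forall>y'\<in>K. dist y' y < d \<longrightarrow> dist (P y') (P y) < e"
    proof (intro exI conjI ballI impI)
      show "rw N k / 3 > 0" using rw_pos[of k] by simp
      fix y' assume "y' \<in> K" "dist y' y < rw N k / 3"
      then obtain t where t: "t \<in> S" "y' = enc N t" unfolding K_def by auto
      have "\<bar>enc N t - enc N s\<bar> < rw N k / 3" using \<open>dist y' y < _\<close> s t by (simp add: dist_real_def)
      then have ag: "t k = s k" using enc_agree[of t s k k] s t by (auto simp: S_def)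
      have "dist (P y') (P y) = dist (\<pi> t) (\<pi> s)" using P_enc s t by simp
      also have "\<dots> \<le> dist (p k (t k)) (\<pi> t) + dist (p k (s k)) (\<pi> s)"
        using ag dist_triangle3[of "\<pi> t" "\<pi> s" "p k (s k)"] by (simp add: dist_commute)
      also have "\<dots> \<le> 4 * \<delta> k + 4 * \<delta> k" using dlim s t by (intro add_mono) auto
      finally show "dist (P y') (P y) < e" using k by linarith
    qed
  qed
  define code where "code x k = (SOME i. i < N k \<and> dist x (p k i) < \<delta> k)" for x k
  have code: "code x k < N k \<and> dist x (p k (code x k)) < \<delta> k" for x k
    unfolding code_def by (rule someI_ex) (use Np(2) in blast)
  have codeS: "code x \<in> S" for x
  proof -
    have "dist (p k (code x k)) (p (Suc k) (code x (Suc k))) \<le> 2 * \<delta> k" for k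
    proof -
      have "dist (p k (code x k)) (p (Suc k) (code x (Suc k))) \<le> dist x (p k (code x k)) + dist x (p (Suc k) (code x (Suc k)))"
        by (rule dist_triangle3)
      also have "\<dots> \<le> \<delta> k + \<delta> (Suc k)" using code[of x k] code[of x "Suc k"] by linarith
      also have "\<dots> \<le> 2 * \<delta> k" by (simp add: \<delta>_def)
      finally show ?thesis .
    qed
    then show ?thesis using code unfolding S_def digits_def by auto
  qed
  have pi_code: "\<pi> (code x) = x" for x
  proof (rule ccontr)
    assume "\<pi> (code x) \<noteq> x"
    then have "dist (\<pi> (code x)) x > 0" by simp
    then obtain k where k: "5 * \<delta> k < dist (\<pi> (code x)) x" using dsmall[of "dist (\<pi> (code x)) x" 5] by auto
    have "dist (\<pi> (code x)) x \<le> dist (p k (code x k)) (\<pi> (code x)) + dist x (p k (code x k))"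
      using dist_triangle3[of "\<pi> (code x)" x "p k (code x k)"] by (simp add: dist_commute)
    also have "\<dots> \<le> 4 * \<delta> k + \<delta> k" using dlim[OF codeS] code[of x k] by (intro add_mono) (auto simp: less_imp_le)
    finally show False using k by linarith
  qed
  define \<iota> where "\<iota> x = enc N (code x)" for x
  have sec: "\<iota> x \<in> K \<and> P (\<iota> x) = x" for x
    unfolding \<iota>_def K_def using P_enc[OF codeS] pi_code codeS by auto
  have Kb: "K \<subseteq> {-1<..1}"
  proof
    fix y assume "y \<in> K"
    then obtain s where "s \<in> S" "y = enc N s" unfolding K_def by auto
    then show "y \<in> {-1<..1}" using enc_range[of s] by (auto simp: S_def)
  qed
  have clK: "closed K"
    unfolding closed_sequential_limits
  proof (intro allI impI, elim conjE)
    fix xs l assume xsK: "\<forall>n. xs n \<in> K" and lim: "xs \<longlonglongrightarrow> l"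
    have "\<forall>n. \<exists>s. s \<in> S \<and> xs n = enc N s" using xsK unfolding K_def by auto
    then obtain ss where ss: "\<And>n. ss n \<in> S" "\<And>n. xs n = enc N (ss n)"
      by metis
    have "Cauchy xs" by (rule LIMSEQ_imp_Cauchy[OF lim])
    have "\<forall>k. \<exists>M. \<forall>m\<ge>M. \<forall>n\<ge>M. dist (xs m) (xs n) < rw N k / 3"
    proof
      fix k
      have "rw N k / 3 > 0" using rw_pos[of k] by simp
      then show "\<exists>M. \<forall>m\<ge>M. \<forall>n\<ge>M. dist (xs m) (xs n) < rw N k / 3"
        using \<open>Cauchy xs\<close> unfolding Cauchy_def by blast
    qed
    then obtain M where M: "\<And>k m n. m \<ge> M k \<Longrightarrow> n \<ge> M k \<Longrightarrow> dist (xs m) (xs n) < rw N k / 3"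
      by metis
    define M' where "M' k = (\<Sum>i\<le>k. M i)" for k
    have M'ge: "M' k \<ge> M k" for k unfolding M'_def by (rule member_le_sum) auto
    have M'mono: "j \<le> k \<Longrightarrow> M' j \<le> M' k" for j k unfolding M'_def by (rule sum_mono2) auto
    define t where "t j = ss (M' j) j" for j
    have A: "ss n j = t j" if "n \<ge> M' k" "j \<le> k" for n j k
    proof -
      have "n \<ge> M j" using M'ge[of j] M'mono[OF that(2)] that(1) by linarith
      then have "dist (xs n) (xs (M' j)) < rw N j / 3" using M M'ge by blast
      then have "\<bar>enc N (ss n) - enc N (ss (M' j))\<bar> < rw N j / 3" using ss by (simp add: dist_real_def)
      then show ?thesis unfolding t_def using enc_agree[of "ss n" "ss (M' j)" j j] ss(1) by (auto simp: S_def)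
    qed
    have tS: "t \<in> S"
    proof -
      have "digits t" using ss(1) unfolding t_def S_def digits_def by auto
      moreover have "dist (p k (t k)) (p (Suc k) (t (Suc k))) \<le> 2 * \<delta> k" for k
      proof -
        have "ss (M' (Suc k)) k = t k" "ss (M' (Suc k)) (Suc k) = t (Suc k)"
          using A[where n="M' (Suc k)" and k="Suc k"] by auto
        moreover have "dist (p k (ss (M' (Suc k)) k)) (p (Suc k) (ss (M' (Suc k)) (Suc k))) \<le> 2 * \<delta> k"
          using ss(1)[of "M' (Suc k)"] unfolding S_def by blast
        ultimately show ?thesis by simp
      qed
      ultimately show ?thesis unfolding S_def by auto
    qed
    have "xs \<longlonglongrightarrow> enc N t"
    proof (rule metric_LIMSEQ_I)
      fix e :: real assume "e > 0"
      obtain k where k: "(1/4::real)^k < e" using real_arch_pow_inv[of e "1/4"] \<open>e > 0\<close> by auto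
      have "rw N k / 3 < e" using rw_le[of k] k rw_pos[of k] by simp
      show "\<exists>no. \<forall>n\<ge>no. dist (xs n) (enc N t) < e"
      proof (intro exI allI impI)
        fix n assume "M' k \<le> n"
        then have "\<bar>enc N (ss n) - enc N t\<bar> \<le> rw N k / 3"
          using A ss(1) tS by (intro enc_close) (auto simp: S_def)
        then show "dist (xs n) (enc N t) < e" using ss(2) \<open>rw N k / 3 < e\<close> by (simp add: dist_real_def)
      qed
    qed
    then have "l = enc N t" using lim LIMSEQ_unique by blast
    then show "l \<in> K" using tS unfolding K_def by auto
  qed
  show ?thesis using clK Kb contP sec by blast
qed

definition cutoff :: "'b::metric_space set \<Rightarrow> nat \<Rightarrow> 'b \<Rightarrow> real" where
  "cutoff C j x = max 0 (1 - real j * infdist x C)"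

lemma cut_cont: "continuous_on UNIV (cutoff C j)"
  unfolding cutoff_def by (intro continuous_intros continuous_on_infdist)

lemma cut_bd: "0 \<le> cutoff C j x" "cutoff C j x \<le> 1"
  unfolding cutoff_def using infdist_nonneg[of x C] by auto

lemma cut_in: "x \<in> C \<Longrightarrow> cutoff C j x = 1"
  unfolding cutoff_def by (simp add: infdist_zero)

lemma cut_ge_ind: "indicator C x \<le> cutoff C j x"
  using cut_in[of x C j] cut_bd[of C j x] by (auto simp: indicator_def)

lemma cut_meas: "sets M = sets borel \<Longrightarrow> cutoff C j \<in> borel_measurable M"
  using borel_measurable_continuous_onI[OF cut_cont] measurable_cong_sets by blast

lemma cut_lim:
  fixes C :: "'b::metric_space set"
  assumes "closed C" "C \<noteq> {}" "finite_measure M" "sets M = sets borel"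
  shows "(\<lambda>j. integral\<^sup>L M (cutoff C j)) \<longlonglongrightarrow> measure M C"
proof -
  interpret finite_measure M by fact
  have CM: "C \<in> sets M" using assms(1,4) by simp
  have "(\<lambda>j. integral\<^sup>L M (cutoff C j)) \<longlonglongrightarrow> integral\<^sup>L M (indicator C)"
  proof (rule integral_dominated_convergence[where w = "\<lambda>_. 1"])
    show "indicator C \<in> borel_measurable M" using CM by simp
    show "cutoff C j \<in> borel_measurable M" for j using cut_meas[OF assms(4)] .
    show "integrable M (\<lambda>_. 1::real)" by simp
    show "AE x in M. norm (cutoff C j x) \<le> 1" for j by (intro AE_I2) (metis real_norm_def abs_of_nonneg cut_bd)
    show "AE x in M. (\<lambda>j. cutoff C j x) \<longlonglongrightarrow> indicator C x"
    proof (rule AE_I2)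
      fix x
      show "(\<lambda>j. cutoff C j x) \<longlonglongrightarrow> indicator C x"
      proof (cases "x \<in> C")
        case True then show ?thesis by (simp add: cut_in)
      next
        case False
        then have pos: "infdist x C > 0"
          using in_closure_iff_infdist_zero[OF assms(2), of x] assms(1) infdist_nonneg[of x C]
          by (simp add: closure_closed)
        obtain j0 :: nat where j0: "1 / infdist x C < j0" using reals_Archimedean2 by blast
        have "\<forall>j\<ge>j0. cutoff C j x = 0"
        proof (intro allI impI)
          fix j assume "j0 \<le> j"
          then have "1 < real j * infdist x C" using j0 pos by (simp add: field_simps)
            (smt (verit) mult_right_mono of_nat_mono)
          then show "cutoff C j x = 0" unfolding cutoff_def by simp
        qed
        then have "(\<lambda>j. cutoff C j x) \<longlonglongrightarrow> 0"
          by (intro tendsto_eventually) (auto simp: eventually_sequentially)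
        then show ?thesis using False by simp
      qed
    qed
  qed
  also have "integral\<^sup>L M (indicator C) = measure M C"
    using CM by (simp add: Bochner_Integration.integral_indicator)
  finally show ?thesis .
qed

lemma avg_integral:
  fixes g :: "'b::topological_space \<Rightarrow> real" and T :: "nat \<Rightarrow> 'b"
  assumes "L > 0" "g \<in> borel_measurable borel"
  shows "integral\<^sup>L (distr (measure_pmf (pmf_of_set {..<L})) borel T) g = (\<Sum>k<L. g (T k)) / real L"
proof -
  have "T \<in> measure_pmf (pmf_of_set {..<L}) \<rightarrow>\<^sub>M borel" by simp
  then have "integral\<^sup>L (distr (measure_pmf (pmf_of_set {..<L})) borel T) g
       = integral\<^sup>L (measure_pmf (pmf_of_set {..<L})) (\<lambda>k. g (T k))"
    using assms(2) by (rule integral_distr)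
  also have "\<dots> = (\<Sum>k<L. g (T k)) / real L"
    using assms(1) by (subst integral_pmf_of_set) auto
  finally show ?thesis .
qed

lemma limit_measure:
  fixes y :: "nat \<Rightarrow> nat \<Rightarrow> 'a::metric_space" and L :: "nat \<Rightarrow> nat"
  assumes cpt: "compact (UNIV::'a set)" and Lpos: "\<And>n. L n > 0"
  shows "\<exists>\<mu> \<sigma>. sets \<mu> = sets borel \<and> prob_space \<mu> \<and> strict_mono (\<sigma>::nat \<Rightarrow> nat) \<and>
     (\<forall>f::'a \<Rightarrow> real. continuous_on UNIV f \<longrightarrow>
        (\<lambda>n. (\<Sum>k<L (\<sigma> n). f (y (\<sigma> n) k)) / real (L (\<sigma> n))) \<longlonglongrightarrow> integral\<^sup>L \<mu> f)"
proof -
  obtain K and P :: "real \<Rightarrow> 'a" and \<iota> where KP: "closed K" "K \<subseteq> {-1<..1}" "continuous_on K P"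
    "\<And>x. \<iota> x \<in> K" "\<And>x. P (\<iota> x) = x"
    using coding[OF cpt] by blast
  define lam where "lam n = distr (measure_pmf (pmf_of_set {..<L n})) borel (\<lambda>k. \<iota> (y n k))" for n
  have lam_avg: "integral\<^sup>L (lam n) g = (\<Sum>k<L n. g (\<iota> (y n k))) / real (L n)"
    if "g \<in> borel_measurable borel" for g n
    unfolding lam_def using Lpos that by (rule avg_integral)
  have rd: "real_distribution (lam n)" for n
  proof (rule real_distribution.intro)
    show "prob_space (lam n)" unfolding lam_def
      by (intro prob_space.prob_space_distr prob_space_measure_pmf) simp
    show "real_distribution_axioms (lam n)" by unfold_locales (simp add: lam_def)
  qed
  have tight: "tight lam"
    unfolding tight_def
  proof (intro conjI allI impI exI)
    show "real_distribution (lam n)" for n by (rule rd)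
    fix e :: real assume "e > 0"
    show "-1 < (1::real)" by simp
    show "measure (lam n) {-1<..1} > 1 - e" for n
    proof -
      have "measure (lam n) {-1<..1} = measure (measure_pmf (pmf_of_set {..<L n})) ((\<lambda>k. \<iota> (y n k)) -` {-1<..1} \<inter> UNIV)"
        unfolding lam_def by (subst measure_distr) auto
      also have "(\<lambda>k. \<iota> (y n k)) -` {-1<..1} \<inter> UNIV = UNIV" using KP(2,4) by auto
      also have "measure (measure_pmf (pmf_of_set {..<L n})) UNIV = 1"
        using prob_space.prob_space[OF prob_space_measure_pmf] by simp
      finally show ?thesis using \<open>e > 0\<close> by simp
    qed
  qed
  obtain r lam0 where r: "strict_mono r" "real_distribution lam0" "weak_conv_m (lam \<circ> id \<circ> r) lam0"
  proof -
    have "strict_mono (id::nat\<Rightarrow>nat)" by (simp add: strict_mono_def)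
    from tight_imp_convergent_subsubsequence[OF tight this] show ?thesis using that by blast
  qed
  interpret lam0: real_distribution lam0 by (rule r(2))
  have wc: "(\<lambda>n. integral\<^sup>L (lam (r n)) G) \<longlonglongrightarrow> integral\<^sup>L lam0 G"
    if "continuous_on UNIV G" "\<And>x. norm (G x) \<le> B" for G :: "real \<Rightarrow> real" and B
  proof -
    have rd': "\<And>n. real_distribution ((lam \<circ> id \<circ> r) n)" using rd by simp
    have ic: "\<And>x. isCont G x" using that(1) continuous_on_eq_continuous_at[of UNIV G] by simp
    have "(\<lambda>n. integral\<^sup>L ((lam \<circ> id \<circ> r) n) G) \<longlonglongrightarrow> integral\<^sup>L lam0 G"
      by (rule weak_conv_imp_integral_bdd_continuous_conv[OF rd' r(2) r(3) ic that(2)])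
    then show ?thesis by simp
  qed
  have Kne: "K \<noteq> {}" using KP(4) by blast
  have K1: "measure lam0 K = 1"
  proof -
    have "(\<lambda>j. integral\<^sup>L lam0 (cutoff K j)) \<longlonglongrightarrow> measure lam0 K"
      by (rule cut_lim[OF KP(1) Kne]) (simp_all add: lam0.finite_measure_axioms)
    moreover have "integral\<^sup>L lam0 (cutoff K j) = 1" for j
    proof -
      have "(\<lambda>n. integral\<^sup>L (lam (r n)) (cutoff K j)) \<longlonglongrightarrow> integral\<^sup>L lam0 (cutoff K j)"
      proof -
        have "norm (cutoff K j x) \<le> 1" for x by (metis real_norm_def abs_of_nonneg cut_bd)
        then show ?thesis by (rule wc[OF cut_cont])
      qed
      moreover have "integral\<^sup>L (lam (r n)) (cutoff K j) = 1" for n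
        using lam_avg[OF borel_measurable_continuous_onI[OF cut_cont]] Lpos[of "r n"]
        by (simp add: cut_in KP(4))
      ultimately have "(\<lambda>n. 1::real) \<longlonglongrightarrow> integral\<^sup>L lam0 (cutoff K j)" by simp
      then show ?thesis using LIMSEQ_unique[OF _ tendsto_const] by metis
    qed
    ultimately have "(\<lambda>j. 1::real) \<longlonglongrightarrow> measure lam0 K" by simp
    then show ?thesis using LIMSEQ_unique[OF _ tendsto_const] by metis
  qed
  obtain x0 :: 'a where True by blast
  define P' where "P' z = (if z \<in> K then P z else x0)" for z
  have P'meas: "P' \<in> borel_measurable borel" unfolding P'_def
    by (rule borel_measurable_continuous_on_if) (use KP(1,3) in auto)
  have P'meas0: "P' \<in> lam0 \<rightarrow>\<^sub>M borel" using P'meas by (simp add: measurable_cong_sets[OF lam0.events_eq_borel refl])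
  define \<mu> where "\<mu> = distr lam0 borel P'"
  have sets\<mu>: "sets \<mu> = sets borel" unfolding \<mu>_def by simp
  have ps\<mu>: "prob_space \<mu>" unfolding \<mu>_def
    by (rule prob_space.prob_space_distr[OF lam0.prob_space_axioms P'meas0])
  have AEK: "AE z in lam0. z \<in> K" by (rule prob_space.AE_prob_1[OF lam0.prob_space_axioms K1])
  have conv: "(\<lambda>n. (\<Sum>k<L (r n). f (y (r n) k)) / real (L (r n))) \<longlonglongrightarrow> integral\<^sup>L \<mu> f"
    if fc: "continuous_on UNIV f" for f :: "'a \<Rightarrow> real"
  proof -
    have "compact (f ` UNIV)" by (rule compact_continuous_image[OF fc cpt])
    then have "bounded (f ` UNIV)" by (rule compact_imp_bounded)
    then obtain B where "\<forall>x\<in>f ` UNIV. norm x \<le> B" unfolding bounded_iff by blast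
    then have B: "\<And>x. norm (f x) \<le> B" by simp
    have B0: "0 \<le> B" using B[of x0] by (meson norm_ge_zero order_trans)
    have cfP: "continuous_on K (f \<circ> P)"
      by (rule continuous_on_compose[OF KP(3)]) (rule continuous_on_subset[OF fc], simp)
    obtain G where G: "continuous_on UNIV G" "\<And>z. z \<in> K \<Longrightarrow> G z = (f \<circ> P) z" "\<And>z. norm (G z) \<le> B"
    proof -
      have cl: "closedin (top_of_set UNIV) K" using KP(1) by (simp add: closedin_closed_eq)
      have bnd: "\<And>z. z \<in> K \<Longrightarrow> norm ((f \<circ> P) z) \<le> B" using B by simp
      have "\<exists>g. continuous_on UNIV g \<and> (\<forall>x\<in>K. g x = (f \<circ> P) x) \<and> (\<forall>x. norm (g x) \<le> B)"
        by (rule Tietze[OF cfP cl B0 bnd]) auto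
      then show ?thesis using that by auto
    qed
    have fmeas: "f \<in> borel_measurable borel" by (rule borel_measurable_continuous_onI[OF fc])
    have Gmeas: "G \<in> borel_measurable borel" by (rule borel_measurable_continuous_onI[OF G(1)])
    have "integral\<^sup>L \<mu> f = integral\<^sup>L lam0 (\<lambda>z. f (P' z))"
      unfolding \<mu>_def by (rule integral_distr[OF P'meas0 fmeas])
    also have "\<dots> = integral\<^sup>L lam0 G"
    proof (rule integral_cong_AE)
      show "(\<lambda>z. f (P' z)) \<in> borel_measurable lam0" using measurable_comp[OF P'meas0 fmeas] by (simp add: o_def)
      show "G \<in> borel_measurable lam0" using Gmeas by (simp add: measurable_cong_sets[OF lam0.events_eq_borel refl])
      show "AE z in lam0. f (P' z) = G z" using AEK by eventually_elim (simp add: P'_def G(2))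
    qed
    finally have eq1: "integral\<^sup>L \<mu> f = integral\<^sup>L lam0 G" .
    have eq2: "integral\<^sup>L (lam (r n)) G = (\<Sum>k<L (r n). f (y (r n) k)) / real (L (r n))" for n
      using lam_avg[OF Gmeas] by (simp add: G(2) KP(4,5))
    show ?thesis using wc[OF G(1,3)] unfolding eq1 eq2 .
  qed
  show ?thesis using sets\<mu> ps\<mu> r(1) conv by blast
qed

lemma meas_eq_cont:
  fixes M1 M2 :: "'a::metric_space measure"
  assumes "finite_measure M1" "finite_measure M2" "sets M1 = sets borel" "sets M2 = sets borel"
    and eq: "\<And>f. continuous_on UNIV f \<Longrightarrow> integral\<^sup>L M1 f = (integral\<^sup>L M2 f :: real)"
  shows "M1 = M2"
proof (rule measure_eqI_generator_eq[where E = "Collect closed" and \<Omega> = UNIV and A = "\<lambda>_. UNIV"])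
  show "Int_stable (Collect closed :: 'a set set)" by (auto simp: Int_stable_def)
  show "Collect closed \<subseteq> Pow (UNIV :: 'a set)" by auto
  have sb: "sets (borel :: 'a measure) = sigma_sets UNIV (Collect closed)"
    unfolding borel_eq_closed by (rule sets_measure_of) auto
  show "sets M1 = sigma_sets UNIV (Collect closed)" using assms(3) sb by simp
  show "sets M2 = sigma_sets UNIV (Collect closed)" using assms(4) sb by simp
  show "range (\<lambda>_. UNIV) \<subseteq> Collect (closed :: 'a set \<Rightarrow> bool)" by auto
  show "(\<Union>i::nat. UNIV) = (UNIV :: 'a set)" by simp
  show "emeasure M1 UNIV \<noteq> \<infinity>" for i :: nat
    using finite_measure.emeasure_finite[OF assms(1)] by simp
  fix C :: "'a set" assume "C \<in> Collect closed"
  then have cC: "closed C" by simp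
  show "emeasure M1 C = emeasure M2 C"
  proof (cases "C = {}")
    case True then show ?thesis by simp
  next
    case False
    have "(\<lambda>j. integral\<^sup>L M1 (cutoff C j)) \<longlonglongrightarrow> measure M1 C" by (rule cut_lim[OF cC False assms(1,3)])
    moreover have "(\<lambda>j. integral\<^sup>L M1 (cutoff C j)) \<longlonglongrightarrow> measure M2 C"
      using cut_lim[OF cC False assms(2,4)] eq[OF cut_cont] by simp
    ultimately have "measure M1 C = measure M2 C" using LIMSEQ_unique by blast
    then show ?thesis
      by (simp add: finite_measure.emeasure_eq_measure[OF assms(1)] finite_measure.emeasure_eq_measure[OF assms(2)])
  qed
qed

lemma inv_from_cont:
  fixes \<mu> :: "'a::metric_space measure"
  assumes "sets \<mu> = sets borel" "prob_space \<mu>" "continuous_on UNIV h"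
    and eq: "\<And>f. continuous_on UNIV f \<Longrightarrow> integral\<^sup>L \<mu> (\<lambda>x. f (h x)) = (integral\<^sup>L \<mu> f :: real)"
  shows "\<mu> \<in> inv_measures h"
proof -
  interpret prob_space \<mu> by fact
  have hm: "h \<in> \<mu> \<rightarrow>\<^sub>M borel"
    unfolding measurable_cong_sets[OF assms(1) refl] by (rule borel_measurable_continuous_onI[OF assms(3)])
  have "distr \<mu> borel h = \<mu>"
  proof (rule meas_eq_cont)
    show "finite_measure (distr \<mu> borel h)" by (rule finite_measure.finite_measure_distr[OF finite_measure_axioms hm])
    show "finite_measure \<mu>" by (rule finite_measure_axioms)
    show "sets (distr \<mu> borel h) = sets borel" by simp
    show "sets \<mu> = sets borel" by fact
    fix f :: "'a \<Rightarrow> real" assume fc: "continuous_on UNIV f"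
    have "integral\<^sup>L (distr \<mu> borel h) f = integral\<^sup>L \<mu> (\<lambda>x. f (h x))"
      by (rule integral_distr[OF hm borel_measurable_continuous_onI[OF fc]])
    then show "integral\<^sup>L (distr \<mu> borel h) f = integral\<^sup>L \<mu> f" using eq[OF fc] by simp
  qed
  have sp: "space \<mu> = UNIV" using sets_eq_imp_space_eq[OF assms(1)] by simp
  have "measure \<mu> (h -` A) = measure \<mu> A" if "A \<in> sets borel" for A
  proof -
    have "measure \<mu> A = measure (distr \<mu> borel h) A" using \<open>distr \<mu> borel h = \<mu>\<close> by simp
    also have "\<dots> = measure \<mu> (h -` A \<inter> space \<mu>)" by (rule measure_distr[OF hm that])
    finally show ?thesis using sp by simp
  qed
  then show ?thesis unfolding inv_measures_def using assms(1,2) by auto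
qed

lemma funpow_meas: fixes h :: "'a::metric_space \<Rightarrow> 'a" shows "continuous_on UNIV h \<Longrightarrow> (h ^^ k) \<in> borel_measurable borel"
proof (induction k)
  case 0
  have "h ^^ 0 = id" by (simp add: fun_eq_iff)
  then show ?case using measurable_ident[of borel] by simp
next
  case (Suc k)
  have "h \<in> borel_measurable borel" using Suc.prems by (rule borel_measurable_continuous_onI)
  then show ?case unfolding funpow_Suc_right using Suc by (intro measurable_comp) auto
qed

lemma freq:
  fixes \<mu> :: "'a::metric_space measure"
  assumes "\<mu> \<in> inv_measures h" "continuous_on UNIV h" "C \<in> sets borel"
  shows "\<exists>x. (\<Sum>k<n. indicator C ((h ^^ k) x)) \<ge> real n * measure \<mu> C / 2"
proof (rule ccontr)
  assume "\<not> ?thesis"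
  then have lt: "(\<Sum>k<n. indicator C ((h ^^ k) x)) < real n * measure \<mu> C / 2" for x
    by (auto simp: not_le)
  have sb: "sets \<mu> = sets borel" and ps: "prob_space \<mu>" and inv: "\<And>A. A \<in> sets borel \<Longrightarrow> measure \<mu> (h -` A) = measure \<mu> A"
    using assms(1) unfolding inv_measures_def by auto
  interpret prob_space \<mu> by fact
  have hk: "(h ^^ k) -` C \<in> sets borel" for k
    using measurable_sets[OF funpow_meas[OF assms(2)] assms(3)] by simp
  have mk: "measure \<mu> ((h ^^ k) -` C) = measure \<mu> C" for k
  proof (induction k)
    case 0 then show ?case by simp
  next
    case (Suc k)
    have "(h ^^ Suc k) -` C = h -` ((h ^^ k) -` C)" by (simp only: funpow_Suc_right vimage_comp)
    then have "measure \<mu> ((h ^^ Suc k) -` C) = measure \<mu> ((h ^^ k) -` C)"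
      using inv[OF hk[of k]] by (simp only:)
    with Suc.IH show ?case by (simp only:)
  qed
  have ik: "integral\<^sup>L \<mu> (\<lambda>x. indicator C ((h ^^ k) x)) = measure \<mu> C" for k
  proof -
    have "(\<lambda>x. indicator C ((h ^^ k) x) :: real) = indicator ((h ^^ k) -` C)" by (auto simp: indicator_def)
    then show ?thesis using hk[of k] sb mk[of k] by (simp add: Bochner_Integration.integral_indicator)
  qed
  have intk: "integrable \<mu> (\<lambda>x. indicator C ((h ^^ k) x) :: real)" for k
  proof -
    have "(\<lambda>x. indicator C ((h ^^ k) x) :: real) = indicator ((h ^^ k) -` C)" by (auto simp: indicator_def)
    moreover have "emeasure \<mu> ((h ^^ k) -` C) < \<infinity>" using emeasure_finite by (simp add: less_top[symmetric])
    ultimately show ?thesis using hk[of k] sb by (simp add: integrable_real_indicator)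
  qed
  have "integral\<^sup>L \<mu> (\<lambda>x. \<Sum>k<n. indicator C ((h ^^ k) x)) = real n * measure \<mu> C"
    using intk ik by (subst Bochner_Integration.integral_sum) auto
  moreover have "integral\<^sup>L \<mu> (\<lambda>x. \<Sum>k<n. indicator C ((h ^^ k) x)) \<le> integral\<^sup>L \<mu> (\<lambda>x. real n * measure \<mu> C / 2)"
    by (rule integral_mono) (use intk lt in \<open>auto intro: less_imp_le\<close>)
  ultimately have "real n * measure \<mu> C \<le> real n * measure \<mu> C / 2" by (simp add: prob_space)
  then have "real n * measure \<mu> C \<le> 0" by simp
  moreover have "0 \<le> (\<Sum>k<n. indicator C ((h ^^ k) (undefined::'a)) :: real)" by (intro sum_nonneg) auto
  ultimately show False using lt[of undefined] by linarith
qed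

lemma main_unif:
  fixes h :: "'a::metric_space \<Rightarrow> 'a"
  assumes cpt: "compact (UNIV::'a set)" and hc: "continuous_on UNIV h"
    and B: "closed B" "B \<noteq> {}" "universally_null h B" and e: "\<epsilon> > 0"
  shows "\<exists>r>0. \<forall>\<mu>\<in>inv_measures h. measure \<mu> {x. infdist x B \<le> r} < \<epsilon>"
proof (rule ccontr)
  assume "\<not> ?thesis"
  then have neg: "\<forall>r>0. \<exists>\<mu>\<in>inv_measures h. measure \<mu> {x. infdist x B \<le> r} \<ge> \<epsilon>"
    by (meson not_less)
  define C where "C n = {x. infdist x B \<le> 1 / real (Suc n)}" for n
  have Ccl: "closed (C n)" for n unfolding C_def
    by (intro closed_Collect_le continuous_on_infdist continuous_on_id continuous_on_const)
  have Cb: "C n \<in> sets borel" for n using Ccl by simp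
  have BC: "B \<subseteq> C n" for n unfolding C_def by (auto simp: infdist_zero)
  have Cmono: "C n \<subseteq> C m" if "m \<le> n" for m n
  proof -
    have "1 / real (Suc n) \<le> 1 / real (Suc m)" using that by (simp add: frac_le)
    then show ?thesis unfolding C_def by auto
  qed
  have "\<forall>n. \<exists>z. (\<Sum>k<Suc n. indicator (C n) ((h ^^ k) z)) \<ge> real (Suc n) * \<epsilon> / 2"
  proof
    fix n
    obtain \<mu> where \<mu>: "\<mu> \<in> inv_measures h" "measure \<mu> (C n) \<ge> \<epsilon>"
      using neg[rule_format, of "1 / real (Suc n)"] unfolding C_def by auto
    obtain z where z: "(\<Sum>k<Suc n. indicator (C n) ((h ^^ k) z)) \<ge> real (Suc n) * measure \<mu> (C n) / 2"
      using freq[OF \<mu>(1) hc Cb] by blast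
    have "real (Suc n) * \<epsilon> / 2 \<le> real (Suc n) * measure \<mu> (C n) / 2"
      using \<mu>(2) by (intro divide_right_mono mult_left_mono) auto
    then show "\<exists>z. (\<Sum>k<Suc n. indicator (C n) ((h ^^ k) z)) \<ge> real (Suc n) * \<epsilon> / 2"
      using z by (intro exI[of _ z]) linarith
  qed
  then obtain x where xf: "\<And>n. (\<Sum>k<Suc n. indicator (C n) ((h ^^ k) (x n))) \<ge> real (Suc n) * \<epsilon> / 2"
    by metis
  obtain \<mu> \<sigma> where \<mu>: "sets \<mu> = sets borel" "prob_space \<mu>" "strict_mono (\<sigma>::nat \<Rightarrow> nat)"
    and lims: "\<And>f::'a \<Rightarrow> real. continuous_on UNIV f \<Longrightarrow>
        (\<lambda>n. (\<Sum>k<Suc (\<sigma> n). f ((h ^^ k) (x (\<sigma> n)))) / real (Suc (\<sigma> n))) \<longlonglongrightarrow> integral\<^sup>L \<mu> f"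
    using limit_measure[OF cpt, of Suc "\<lambda>n k. (h ^^ k) (x n)"] by auto
  interpret prob_space \<mu> by fact
  have sig: "n \<le> \<sigma> n" for n by (rule seq_suble[OF \<mu>(3)])
  have inv_eq: "integral\<^sup>L \<mu> (\<lambda>z. f (h z)) = integral\<^sup>L \<mu> f" if fc: "continuous_on UNIV f" for f :: "'a \<Rightarrow> real"
  proof -
    have "compact (f ` UNIV)" by (rule compact_continuous_image[OF fc cpt])
    then have "bounded (f ` UNIV)" by (rule compact_imp_bounded)
    then obtain Bf where "\<forall>y\<in>f ` UNIV. norm y \<le> Bf" unfolding bounded_iff by blast
    then have Bf: "\<And>z. \<bar>f z\<bar> \<le> Bf" by simp
    have fhc: "continuous_on UNIV (\<lambda>z. f (h z))"
      using continuous_on_compose[OF hc, of f] continuous_on_subset[OF fc] by (simp add: o_def)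
    define a where "a n = (\<Sum>k<Suc (\<sigma> n). f (h ((h ^^ k) (x (\<sigma> n))))) / real (Suc (\<sigma> n))" for n
    define b where "b n = (\<Sum>k<Suc (\<sigma> n). f ((h ^^ k) (x (\<sigma> n)))) / real (Suc (\<sigma> n))" for n
    have la: "a \<longlonglongrightarrow> integral\<^sup>L \<mu> (\<lambda>z. f (h z))" unfolding a_def using lims[OF fhc] by simp
    have lb: "b \<longlonglongrightarrow> integral\<^sup>L \<mu> f" unfolding b_def using lims[OF fc] by simp
    have tel: "(\<Sum>k<m. f (h ((h ^^ k) z))) - (\<Sum>k<m. f ((h ^^ k) z)) = f ((h ^^ m) z) - f z" for m z
    proof -
      have "(\<Sum>k<m. f (h ((h ^^ k) z))) - (\<Sum>k<m. f ((h ^^ k) z))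
          = (\<Sum>k<m. f ((h ^^ Suc k) z) - f ((h ^^ k) z))" by (simp add: sum_subtractf)
      also have "\<dots> = f ((h ^^ m) z) - f ((h ^^ 0) z)"
        by (rule sum_lessThan_telescope[of "\<lambda>k. f ((h ^^ k) z)"])
      finally show ?thesis by simp
    qed
    have "(\<lambda>n. a n - b n) \<longlonglongrightarrow> 0"
    proof (rule Lim_null_comparison)
      show "\<forall>\<^sub>F n in sequentially. norm (a n - b n) \<le> 2 * Bf * inverse (real (Suc n))"
      proof (rule always_eventually, rule allI)
        fix n
        have "a n - b n = ((\<Sum>k<Suc (\<sigma> n). f (h ((h ^^ k) (x (\<sigma> n))))) - (\<Sum>k<Suc (\<sigma> n). f ((h ^^ k) (x (\<sigma> n))))) / real (Suc (\<sigma> n))"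
          unfolding a_def b_def by (rule diff_divide_distrib[symmetric])
        then have "a n - b n = (f ((h ^^ Suc (\<sigma> n)) (x (\<sigma> n))) - f (x (\<sigma> n))) / real (Suc (\<sigma> n))"
          unfolding tel .
        then have "norm (a n - b n) = \<bar>f ((h ^^ Suc (\<sigma> n)) (x (\<sigma> n))) - f (x (\<sigma> n))\<bar> / real (Suc (\<sigma> n))"
          by simp
        also have "\<dots> \<le> 2 * Bf / real (Suc (\<sigma> n))"
          using Bf[of "(h ^^ Suc (\<sigma> n)) (x (\<sigma> n))"] Bf[of "x (\<sigma> n)"]
          by (intro divide_right_mono) auto
        also have "\<dots> \<le> 2 * Bf / real (Suc n)"
          using sig[of n] Bf[of "x 0"] by (intro divide_left_mono) auto
        finally show "norm (a n - b n) \<le> 2 * Bf * inverse (real (Suc n))" by (simp add: divide_inverse)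
      qed
      show "(\<lambda>n. 2 * Bf * inverse (real (Suc n))) \<longlonglongrightarrow> 0"
        using tendsto_mult[OF tendsto_const LIMSEQ_inverse_real_of_nat, of "2 * Bf"] by simp
    qed
    then have "(\<lambda>n. (a n - b n) + b n) \<longlonglongrightarrow> 0 + integral\<^sup>L \<mu> f" by (rule tendsto_add[OF _ lb])
    then have "a \<longlonglongrightarrow> integral\<^sup>L \<mu> f" by simp
    then show ?thesis using la LIMSEQ_unique by blast
  qed
  have \<mu>inv: "\<mu> \<in> inv_measures h" by (rule inv_from_cont[OF \<mu>(1,2) hc inv_eq])
  have Cm: "measure \<mu> (C m) \<ge> \<epsilon> / 2" for m
  proof -
    have Cne: "C m \<noteq> {}" using BC B(2) by blast
    have "integral\<^sup>L \<mu> (cutoff (C m) j) \<ge> \<epsilon> / 2" for j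
    proof (rule LIMSEQ_le_const[OF lims[OF cut_cont]], intro exI allI impI)
      fix n assume "m \<le> n"
      then have sub: "C (\<sigma> n) \<subseteq> C m" using sig[of n] by (intro Cmono) auto
      have "real (Suc (\<sigma> n)) * \<epsilon> / 2 \<le> (\<Sum>k<Suc (\<sigma> n). indicator (C (\<sigma> n)) ((h ^^ k) (x (\<sigma> n))))"
        by (rule xf)
      also have "\<dots> \<le> (\<Sum>k<Suc (\<sigma> n). cutoff (C m) j ((h ^^ k) (x (\<sigma> n))))"
      proof (rule sum_mono)
        fix k
        have "indicator (C (\<sigma> n)) ((h ^^ k) (x (\<sigma> n))) \<le> (indicator (C m) ((h ^^ k) (x (\<sigma> n))) :: real)"
          using sub by (auto simp: indicator_def)
        also have "\<dots> \<le> cutoff (C m) j ((h ^^ k) (x (\<sigma> n)))" by (rule cut_ge_ind)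
        finally show "indicator (C (\<sigma> n)) ((h ^^ k) (x (\<sigma> n))) \<le> cutoff (C m) j ((h ^^ k) (x (\<sigma> n)))" .
      qed
      finally show "\<epsilon> / 2 \<le> (\<Sum>k<Suc (\<sigma> n). cutoff (C m) j ((h ^^ k) (x (\<sigma> n)))) / real (Suc (\<sigma> n))"
        by (simp add: field_simps)
    qed
    moreover have "(\<lambda>j. integral\<^sup>L \<mu> (cutoff (C m) j)) \<longlonglongrightarrow> measure \<mu> (C m)"
      by (rule cut_lim[OF Ccl Cne finite_measure_axioms \<mu>(1)])
    ultimately show ?thesis using LIMSEQ_le_const by blast
  qed
  have "B = (\<Inter>n. C n)"
  proof
    show "B \<subseteq> (\<Inter>n. C n)" using BC by auto
    show "(\<Inter>n. C n) \<subseteq> B"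
    proof
      fix z assume z: "z \<in> (\<Inter>n. C n)"
      show "z \<in> B"
      proof (rule ccontr)
        assume "z \<notin> B"
        then have pos: "infdist z B > 0"
          using in_closure_iff_infdist_zero[OF B(2), of z] B(1) infdist_nonneg[of z B]
          by (simp add: closure_closed)
        obtain n where "inverse (real (Suc n)) < infdist z B" using reals_Archimedean pos by blast
        moreover have "z \<in> C n" using z by blast
        ultimately show False unfolding C_def by (auto simp: divide_inverse)
      qed
    qed
  qed
  moreover have "(\<lambda>n. measure \<mu> (C n)) \<longlonglongrightarrow> measure \<mu> (\<Inter>n. C n)"
  proof (rule finite_Lim_measure_decseq)
    show "range C \<subseteq> sets \<mu>" using Cb \<mu>(1) by auto
    show "decseq C" by (rule decseq_SucI) (rule Cmono, simp)
  qed
  ultimately have "measure \<mu> B \<ge> \<epsilon> / 2" using Cm LIMSEQ_le_const by (metis (no_types, lifting))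
  moreover have "measure \<mu> B = 0" using B(3) \<mu>inv unfolding universally_null_def by auto
  ultimately show False using e by linarith
qed

lemma top_small_empty: "top_small h {}"
  unfolding top_small_def by (intro conjI exI[of _ 0]) auto

lemma meas_le_nb:
  fixes B :: "'a::metric_space set"
  assumes "\<mu> \<in> inv_measures h" "A \<subseteq> {x. infdist x B \<le> r}"
  shows "measure \<mu> A \<le> measure \<mu> {x. infdist x B \<le> r}"
proof -
  have sb: "sets \<mu> = sets borel" and ps: "prob_space \<mu>" using assms(1) unfolding inv_measures_def by auto
  have "closed {x. infdist x B \<le> r}"
    by (intro closed_Collect_le continuous_on_infdist continuous_on_id continuous_on_const)
  then have "{x. infdist x B \<le> r} \<in> sets \<mu>" using sb by simp
  then show ?thesis using finite_measure.finite_measure_mono[OF prob_space.finite_measure[OF ps] assms(2)] by simp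
qed

lemma tsbp_sep:
  fixes h :: "'a::metric_space \<Rightarrow> 'a"
  assumes cpt: "compact (UNIV::'a set)" and tsbp: "top_small_boundary_property h"
    and "closed F" "open Op" "F \<subseteq> Op"
  shows "\<exists>V. open V \<and> F \<subseteq> V \<and> closure V \<subseteq> Op \<and> top_small h (frontier V)"
proof -
  have cF: "compact F" using closed_Int_compact[OF assms(3) cpt] by simp
  have cK: "compact (- Op)" using closed_Int_compact[of "- Op", OF _ cpt] assms(4) by (simp add: closed_Compl)
  obtain V V' where VV: "open V" "open V'" "F \<subseteq> V" "- Op \<subseteq> V'" "closure V \<inter> closure V' = {}"
      "top_small h (frontier V)"
  proof -
    have "F \<inter> - Op = {}" using assms(5) by blast
    then have "\<exists>U V. open U \<and> open V \<and> F \<subseteq> U \<and> - Op \<subseteq> V \<and>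
               closure U \<inter> closure V = {} \<and> top_small h (frontier U)"
      using tsbp cF cK unfolding top_small_boundary_property_def by simp
    then show ?thesis using that by blast
  qed
  have "closure V \<subseteq> Op"
  proof
    fix z assume "z \<in> closure V"
    show "z \<in> Op"
    proof (rule ccontr)
      assume "z \<notin> Op"
      then have "z \<in> closure V'" using VV(4) closure_subset by blast
      then show False using \<open>z \<in> closure V\<close> VV(5) by blast
    qed
  qed
  then show ?thesis using VV by blast
qed

theorem corollary4p10:
  fixes h :: "'a::metric_space \<Rightarrow> 'a" and \<epsilon> :: real
  assumes "compact (UNIV :: 'a set)"
    and "infinite (UNIV :: 'a set)"
    and "homeo h"
    and "minimal_map h"
    and "top_small_boundary_property h"
    and "\<epsilon> > 0"
  shows "(\<forall>U. open U \<and> universally_null h (frontier U) \<longrightarrow>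
            (\<exists>V. open V \<and> closure V \<subseteq> U \<and> top_small h (frontier V) \<and>
                 (\<forall>M \<in> inv_measures h. measure M (U - closure V) < \<epsilon>)))
       \<and> (\<forall>U F. open U \<and> closed F \<and> F \<subseteq> U \<and> universally_null h (frontier F) \<longrightarrow>
            (\<exists>V. open V \<and> F \<subseteq> V \<and> closure V \<subseteq> U \<and> top_small h (frontier V) \<and>
                 (\<forall>M \<in> inv_measures h. measure M (V - F) < \<epsilon>)))
       \<and> (\<forall>F. closed F \<and> universally_null h (frontier F) \<longrightarrow>
            (\<exists>V. open V \<and> F \<subseteq> V \<and> top_small h (frontier V) \<and>
                 (\<forall>M \<in> inv_measures h. measure M (V - F) < \<epsilon>)))"
proof -
  note cpt = assms(1) and tsbp = assms(5) and e = assms(6)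
  have hc: "continuous_on UNIV h" using assms(3) unfolding homeo_def homeomorphism_def by blast
  have P1: "\<exists>V. open V \<and> closure V \<subseteq> U \<and> top_small h (frontier V) \<and>
                 (\<forall>M \<in> inv_measures h. measure M (U - closure V) < \<epsilon>)"
    if U: "open U" "universally_null h (frontier U)" for U
  proof (cases "frontier U = {}")
    case True
    then have "closure U \<subseteq> U" using U(1) by (auto simp: frontier_def interior_open)
    moreover have "U - closure U = {}" using closure_subset by blast
    ultimately show ?thesis using U(1) True e top_small_empty[of h] by (intro exI[of _ U]) auto
  next
    case False
    obtain r where r: "r > 0" "\<forall>\<mu>\<in>inv_measures h. measure \<mu> {x. infdist x (frontier U) \<le> r} < \<epsilon>"
      using main_unif[OF cpt hc frontier_closed False U(2) e] by blast
    define W where "W = {x. infdist x (frontier U) < r}"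
    define Kc where "Kc = closure U - W"
    have Wo: "open W" unfolding W_def
      by (intro open_Collect_less continuous_on_infdist continuous_on_id continuous_on_const)
    have Kcl: "closed Kc" unfolding Kc_def using Wo by (intro closed_Diff) auto
    have KU: "Kc \<subseteq> U"
    proof
      fix z assume z: "z \<in> Kc"
      show "z \<in> U"
      proof (rule ccontr)
        assume "z \<notin> U"
        then have "z \<in> frontier U" using z U(1) unfolding Kc_def by (auto simp: frontier_def interior_open)
        then have "z \<in> W" unfolding W_def using r(1) by (simp add: infdist_zero)
        then show False using z unfolding Kc_def by blast
      qed
    qed
    obtain V where V: "open V" "Kc \<subseteq> V" "closure V \<subseteq> U" "top_small h (frontier V)"
      using tsbp_sep[OF cpt tsbp Kcl U(1) KU] by blast
    have sub: "U - closure V \<subseteq> {x. infdist x (frontier U) \<le> r}"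
    proof
      fix z assume z: "z \<in> U - closure V"
      then have "z \<notin> Kc" using V(2) closure_subset by blast
      then have "z \<in> W" using z closure_subset unfolding Kc_def by blast
      then show "z \<in> {x. infdist x (frontier U) \<le> r}" unfolding W_def by auto
    qed
    show ?thesis
    proof (intro exI[of _ V] conjI ballI)
      fix M assume M: "M \<in> inv_measures h"
      have "measure M {x. infdist x (frontier U) \<le> r} < \<epsilon>" using r(2) M by blast
      then show "measure M (U - closure V) < \<epsilon>" using meas_le_nb[OF M sub] by linarith
    qed (use V in simp_all)
  qed
  have P2: "\<exists>V. open V \<and> F \<subseteq> V \<and> closure V \<subseteq> U \<and> top_small h (frontier V) \<and>
                 (\<forall>M \<in> inv_measures h. measure M (V - F) < \<epsilon>)"
    if UF: "open U" "closed F" "F \<subseteq> U" "universally_null h (frontier F)" for U F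
  proof (cases "frontier F = {}")
    case True
    then have "F \<subseteq> interior F" using UF(2) by (auto simp: frontier_def closure_closed)
    then have "open F" using interior_subset[of F] by (metis open_interior subset_antisym)
    then show ?thesis using UF True e top_small_empty[of h] closure_closed[OF UF(2)]
      by (intro exI[of _ F]) auto
  next
    case False
    obtain r where r: "r > 0" "\<forall>\<mu>\<in>inv_measures h. measure \<mu> {x. infdist x (frontier F) \<le> r} < \<epsilon>"
      using main_unif[OF cpt hc frontier_closed False UF(4) e] by blast
    define W where "W = {x. infdist x (frontier F) < r}"
    have Wo: "open W" unfolding W_def
      by (intro open_Collect_less continuous_on_infdist continuous_on_id continuous_on_const)
    have FW: "F \<subseteq> interior F \<union> W"
    proof
      fix z assume "z \<in> F"
      show "z \<in> interior F \<union> W"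
      proof (cases "z \<in> interior F")
        case False
        then have "z \<in> frontier F" using \<open>z \<in> F\<close> closure_subset unfolding frontier_def by blast
        then show ?thesis unfolding W_def using r(1) by (simp add: infdist_zero)
      qed simp
    qed
    define Op where "Op = (interior F \<union> W) \<inter> U"
    have Opo: "open Op" unfolding Op_def using Wo UF(1) by auto
    have FO: "F \<subseteq> Op" unfolding Op_def using FW UF(3) by blast
    obtain V where V: "open V" "F \<subseteq> V" "closure V \<subseteq> Op" "top_small h (frontier V)"
      using tsbp_sep[OF cpt tsbp UF(2) Opo FO] by blast
    have sub: "V - F \<subseteq> {x. infdist x (frontier F) \<le> r}"
    proof
      fix z assume z: "z \<in> V - F"
      then have "z \<in> Op" using V(3) closure_subset by blast
      then have "z \<in> W" using z interior_subset[of F] unfolding Op_def by blast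
      then show "z \<in> {x. infdist x (frontier F) \<le> r}" unfolding W_def by auto
    qed
    show ?thesis
    proof (intro exI[of _ V] conjI ballI)
      show "closure V \<subseteq> U" using V(3) unfolding Op_def by blast
    next
      fix M assume M: "M \<in> inv_measures h"
      have "measure M {x. infdist x (frontier F) \<le> r} < \<epsilon>" using r(2) M by blast
      then show "measure M (V - F) < \<epsilon>" using meas_le_nb[OF M sub] by linarith
    qed (use V in simp_all)
  qed
  have P3: "\<exists>V. open V \<and> F \<subseteq> V \<and> top_small h (frontier V) \<and>
                 (\<forall>M \<in> inv_measures h. measure M (V - F) < \<epsilon>)"
    if cF: "closed F" and nF: "universally_null h (frontier F)" for F
  proof -
    obtain V where "open V \<and> F \<subseteq> V \<and> closure V \<subseteq> UNIV \<and> top_small h (frontier V) \<and>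
                 (\<forall>M \<in> inv_measures h. measure M (V - F) < \<epsilon>)"
      using P2[of UNIV F] cF nF by auto
    then show ?thesis by blast
  qed
  show ?thesis
  proof (intro conjI allI impI)
    show "\<exists>V. open V \<and> closure V \<subseteq> U \<and> top_small h (frontier V) \<and>
                 (\<forall>M \<in> inv_measures h. measure M (U - closure V) < \<epsilon>)"
      if "open U \<and> universally_null h (frontier U)" for U using P1 that by blast
    show "\<exists>V. open V \<and> F \<subseteq> V \<and> closure V \<subseteq> U \<and> top_small h (frontier V) \<and>
                 (\<forall>M \<in> inv_measures h. measure M (V - F) < \<epsilon>)"
      if "open U \<and> closed F \<and> F \<subseteq> U \<and> universally_null h (frontier F)" for U F using P2 that by blast
    show "\<exists>V. open V \<and> F \<subseteq> V \<and> top_small h (frontier V) \<and>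
                 (\<forall>M \<in> inv_measures h. measure M (V - F) < \<epsilon>)"
      if "closed F \<and> universally_null h (frontier F)" for F using P3 that by blast
  qed
qed

end
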